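(* Let $(\mathcal X,\rho)$ be a Polish space, $\mu$ a probability measure on $\mathcal X$, $n\ge1$, and $A$ a subset of the set of probability measures on $\mathcal X$ such that $\{x\in\mathcal X^n:L_n^x\in A\}$ is measurable. Then for every probability measure $\nu\ll\mu$ on $\mathcal X$ with $\nu^n(L_n^\cdot\in A)>0$, \[\frac1n\log\Big(\mu^n(L_n^\cdot\in A)\,e^{nH(\nu\,|\,\mu)}\Big)\ge -H(\nu\,|\,\mu)\frac{\nu^n(L_n^\cdot\in A^c)}{\nu^n(L_n^\cdot\in A)}+\frac1n\log\nu^n(L_n^\cdot\in A)-\frac{1}{n\,e\,\nu^n(L_n^\cdot\in A)}.\]
   Context: $L_n^x=\frac1n\sum_{i=1}^n\delta_{x^i}$ for $x=(x^1,\dots,x^n)\in\mathcal X^n$; $\nu^n(L_n^\cdot\in A)$ denotes $\nu^n(\{x:L_n^x\in A\})$. $H(\nu\,|\,\mu)=\int\log\frac{d\nu}{d\mu}d\nu$. *)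

theory Defs
  imports "HOL-Probability.Probability"
begin

definition emp_measure :: "nat \<Rightarrow> (nat \<Rightarrow> 'a::topological_space) \<Rightarrow> 'a measure" where
  "emp_measure n x = measure_of UNIV (sets borel)
     (\<lambda>B. ennreal ((\<Sum>i<n. indicator B (x i)) / real n))"

text \<open>The negative part of the integrand is always nu-integrable, so
  non-integrability means the integral is +infinity.\<close>
definition rel_entropy :: "'a measure \<Rightarrow> 'a measure \<Rightarrow> ereal" where
  "rel_entropy \<nu> \<mu> =
     (if integrable \<nu> (\<lambda>x. ln (enn2real (RN_deriv \<mu> \<nu> x)))
      then ereal (\<integral>x. ln (enn2real (RN_deriv \<mu> \<nu> x)) \<partial>\<nu>)
      else \<infinity>)"

end

theory Submission
  imports Defs
begin

lemma PiM_density_prod: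
  fixes \<mu> :: "'a measure" and g :: "'a \<Rightarrow> real"
  assumes mu: "prob_space \<mu>" and fI: "finite I" and gm[measurable]: "g \<in> borel_measurable \<mu>"
    and g0: "\<And>x. 0 \<le> g x" and pd: "prob_space (density \<mu> g)"
  shows "density (PiM I (\<lambda>_. \<mu>)) (\<lambda>x. ennreal (\<Prod>i\<in>I. g (x i))) = PiM I (\<lambda>_. density \<mu> g)"
proof -
  interpret Q: product_sigma_finite "\<lambda>_. \<mu>"
    using mu by (simp add: product_sigma_finite_def prob_space_imp_sigma_finite)
  interpret P: product_sigma_finite "\<lambda>_. density \<mu> g"
    using pd by (simp add: product_sigma_finite_def prob_space_imp_sigma_finite)
  show ?thesis
  proof (rule P.PiM_eqI[OF fI])
    show "sets (density (PiM I (\<lambda>_. \<mu>)) (\<lambda>x. ennreal (\<Prod>i\<in>I. g (x i)))) = sets (PiM I (\<lambda>_. density \<mu> g))"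
      unfolding sets_density by (rule sets_PiM_cong) simp_all
  next
    fix A assume A: "\<And>i. i \<in> I \<Longrightarrow> A i \<in> sets (density \<mu> g)"
    then have A': "\<And>i. i \<in> I \<Longrightarrow> A i \<in> sets \<mu>" by simp
    have PE: "Pi\<^sub>E I A \<in> sets (PiM I (\<lambda>_. \<mu>))"
      using A' fI by (intro sets_PiM_I_finite) auto
    have "emeasure (density (PiM I (\<lambda>_. \<mu>)) (\<lambda>x. ennreal (\<Prod>i\<in>I. g (x i)))) (Pi\<^sub>E I A)
       = (\<integral>\<^sup>+ x. ennreal (\<Prod>i\<in>I. g (x i)) * indicator (Pi\<^sub>E I A) x \<partial>PiM I (\<lambda>_. \<mu>))"
      using PE by (intro emeasure_density) auto
    also have "\<dots> = (\<integral>\<^sup>+ x. (\<Prod>i\<in>I. ennreal (g (x i)) * indicator (A i) (x i)) \<partial>PiM I (\<lambda>_. \<mu>))"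
    proof (rule nn_integral_cong)
      fix x assume x: "x \<in> space (PiM I (\<lambda>_. \<mu>))"
      have "(\<Prod>i\<in>I. ennreal (g (x i)) * indicator (A i) (x i))
           = (\<Prod>i\<in>I. ennreal (g (x i))) * (\<Prod>i\<in>I. indicator (A i) (x i))"
        by (simp add: prod.distrib)
      also have "(\<Prod>i\<in>I. ennreal (g (x i))) = ennreal (\<Prod>i\<in>I. g (x i))"
        using g0 by (simp add: prod_ennreal)
      also have "(\<Prod>i\<in>I. indicator (A i) (x i) :: ennreal) = indicator (Pi\<^sub>E I A) x"
        using x fI by (auto simp: indicator_def space_PiM PiE_def Pi_def extensional_def)
      finally show "ennreal (\<Prod>i\<in>I. g (x i)) * indicator (Pi\<^sub>E I A) x
          = (\<Prod>i\<in>I. ennreal (g (x i)) * indicator (A i) (x i))" by simp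
    qed
    also have "\<dots> = (\<Prod>i\<in>I. \<integral>\<^sup>+ y. ennreal (g y) * indicator (A i) y \<partial>\<mu>)"
      using A' by (intro Q.product_nn_integral_prod fI) auto
    also have "\<dots> = (\<Prod>i\<in>I. emeasure (density \<mu> g) (A i))"
      using A' by (intro prod.cong refl emeasure_density[symmetric]) auto
    finally show "emeasure (density (PiM I (\<lambda>_. \<mu>)) (\<lambda>x. ennreal (\<Prod>i\<in>I. g (x i)))) (Pi\<^sub>E I A)
       = (\<Prod>i\<in>I. emeasure (density \<mu> g) (A i))" .
  qed
qed

lemma xlnx_ge: fixes x :: real assumes "0 \<le> x" shows "x * ln x \<ge> - 1 / exp 1"
proof (cases "x = 0")
  case True then show ?thesis by simp
next
  case False
  then have x: "x > 0" using assms by simp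
  have "ln (1 / (exp 1 * x)) \<le> 1 / (exp 1 * x) - 1"
    using x by (intro ln_le_minus_one) auto
  moreover have "ln (1 / (exp 1 * x)) = - 1 - ln x"
    using x by (simp add: ln_div ln_mult)
  ultimately have "- ln x \<le> 1 / (exp 1 * x)" by simp
  then have "x * (- ln x) \<le> x * (1 / (exp 1 * x))" using x by (intro mult_left_mono) auto
  then show ?thesis using x by simp
qed

lemma main_lemma:
  fixes \<mu> \<nu> :: "'a measure" and S and n :: nat
  assumes mu: "prob_space \<mu>" and nu: "prob_space \<nu>" and sets_nu: "sets \<nu> = sets \<mu>"
    and ac: "absolutely_continuous \<mu> \<nu>" and n: "n \<ge> 1"
    and S: "S \<in> sets (PiM {..<n} (\<lambda>_. \<mu>))"
    and spos: "measure (PiM {..<n} (\<lambda>_. \<nu>)) S > 0"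
  shows "(rel_entropy \<nu> \<mu> = \<infinity> \<longrightarrow> measure (PiM {..<n} (\<lambda>_. \<mu>)) S > 0)
       \<and> (\<forall>h. rel_entropy \<nu> \<mu> = ereal h \<longrightarrow>
            (1 / real n) * ln (measure (PiM {..<n} (\<lambda>_. \<mu>)) S * exp (real n * h))
            \<ge> - h * measure (PiM {..<n} (\<lambda>_. \<nu>)) (space (PiM {..<n} (\<lambda>_. \<nu>)) - S)
                 / measure (PiM {..<n} (\<lambda>_. \<nu>)) S
              + (1 / real n) * ln (measure (PiM {..<n} (\<lambda>_. \<nu>)) S)
              - 1 / (real n * exp 1 * measure (PiM {..<n} (\<lambda>_. \<nu>)) S))"
proof -
  interpret mu: prob_space \<mu> by fact
  interpret nu: prob_space \<nu> by fact
  define Q where "Q = PiM {..<n} (\<lambda>_. \<mu>)"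
  define P where "P = PiM {..<n} (\<lambda>_. \<nu>)"
  define RN where "RN = RN_deriv \<mu> \<nu>"
  define g where "g = (\<lambda>x. enn2real (RN x))"
  have RNm[measurable]: "RN \<in> borel_measurable \<mu>" unfolding RN_def by simp
  have gm[measurable]: "g \<in> borel_measurable \<mu>" unfolding g_def by simp
  have gmn: "g \<in> borel_measurable \<nu>" using gm sets_nu by (simp cong: measurable_cong_sets)
  have g0: "\<And>x. 0 \<le> g x" unfolding g_def by simp
  have dRN: "density \<mu> RN = \<nu>"
    unfolding RN_def using ac sets_nu by (rule mu.density_RN_deriv)
  have fin: "AE x in \<mu>. RN x \<noteq> \<infinity>"
    unfolding RN_def using ac sets_nu nu.sigma_finite_measure_axioms
    by (intro mu.RN_deriv_finite) auto
  have dg: "density \<mu> (\<lambda>x. ennreal (g x)) = \<nu>"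
  proof -
    have "density \<mu> (\<lambda>x. ennreal (g x)) = density \<mu> RN"
      using fin by (intro density_cong) (auto simp: g_def less_top)
    then show ?thesis using dRN by simp
  qed
  have gpos: "AE x in \<nu>. 0 < g x"
  proof -
    have "AE x in density \<mu> (\<lambda>x. ennreal (g x)). 0 < g x"
      by (subst AE_density) auto
    then show ?thesis using dg by metis
  qed
  define F where "F = (\<lambda>x. \<Prod>i\<in>{..<n}. g (x i))"
  have Pd: "P = density Q (\<lambda>x. ennreal (F x))"
    unfolding P_def Q_def F_def
    using PiM_density_prod[OF mu finite_lessThan gm g0] dg nu by simp
  have setsPQ: "sets P = sets Q" unfolding P_def Q_def
    by (rule sets_PiM_cong) (auto simp: sets_nu)
  have spPQ: "space P = space Q" using sets_eq_imp_space_eq[OF setsPQ] .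
  have Fm[measurable]: "F \<in> borel_measurable Q" unfolding F_def Q_def by measurable
  have F0: "\<And>x. 0 \<le> F x" unfolding F_def using g0 by (simp add: prod_nonneg)
  have SQ[measurable]: "S \<in> sets Q" using S Q_def by simp
  have SP[measurable]: "S \<in> sets P" using SQ setsPQ by simp
  interpret P: prob_space P unfolding P_def using nu by (intro prob_space_PiM) auto
  interpret Q: prob_space Q unfolding Q_def using mu by (intro prob_space_PiM) auto
  define s where "s = measure P S"
  have iSP: "integrable P (indicator S :: _ \<Rightarrow> real)"
  proof -
    have "integrable P (\<lambda>x. indicator S x *\<^sub>R (1::real))"
      using SP by (intro Bochner_Integration.integrable_indicator) (auto simp: less_top[symmetric])
    then show ?thesis by simp
  qed
  have s0: "s > 0" using spos unfolding s_def P_def by simp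
  have s1: "s \<le> 1" unfolding s_def by simp
  have part1: "measure Q S > 0"
  proof (rule ccontr)
    assume "\<not> measure Q S > 0"
    then have "measure Q S = 0" using measure_nonneg[of Q S] by linarith
    then have "S \<in> null_sets Q" using SQ by (simp add: Q.emeasure_eq_measure null_sets_def)
    then have "AE x in Q. x \<in> S \<longrightarrow> F x = 0" using AE_not_in by force
    then have "S \<in> null_sets P" unfolding Pd using SQ
      by (subst null_sets_density_iff) auto
    then have "s = 0" unfolding s_def by (simp add: P.emeasure_eq_measure null_sets_def)
    then show False using s0 by simp
  qed
  have part2: "(1 / real n) * ln (measure Q S * exp (real n * h))
            \<ge> - h * measure P (space P - S) / s + (1 / real n) * ln s - 1 / (real n * exp 1 * s)"
    if hE: "rel_entropy \<nu> \<mu> = ereal h" for h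
  proof -
    have lgi: "integrable \<nu> (\<lambda>x. ln (g x))" and lgh: "(\<integral>x. ln (g x) \<partial>\<nu>) = h"
      using hE unfolding rel_entropy_def g_def RN_def by (auto split: if_splits)
    have lgm: "(\<lambda>x. ln (g x)) \<in> borel_measurable \<nu>" using gmn by measurable
    define L where "L = (\<lambda>x. ln (F x))"
    have Lm[measurable]: "L \<in> borel_measurable Q" unfolding L_def by measurable
    have LmP: "L \<in> borel_measurable P" using Lm setsPQ by (simp cong: measurable_cong_sets)
    have comp: "distr P \<nu> (\<lambda>x. x i) = \<nu>" if "i \<in> {..<n}" for i
      unfolding P_def using that nu by (intro distr_PiM_component) auto
    have compm: "(\<lambda>x. x i) \<in> measurable P \<nu>" if "i \<in> {..<n}" for i
      unfolding P_def using that by measurable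
    have ci: "integrable P (\<lambda>x. ln (g (x i)))" and cI: "(\<integral>x. ln (g (x i)) \<partial>P) = h"
      if i: "i \<in> {..<n}" for i
    proof -
      show "integrable P (\<lambda>x. ln (g (x i)))"
        using integrable_distr_eq[OF compm[OF i] lgm] lgi comp[OF i] by simp
      show "(\<integral>x. ln (g (x i)) \<partial>P) = h"
        using integral_distr[OF compm[OF i] lgm] lgh comp[OF i] by simp
    qed
    have AEpos: "AE x in P. \<forall>i\<in>{..<n}. 0 < g (x i)"
      unfolding P_def using gpos nu
      by (intro eventually_ball_finite ballI AE_PiM_component) auto
    have AEL: "AE x in P. L x = (\<Sum>i<n. ln (g (x i)))"
      using AEpos unfolding L_def F_def
      by eventually_elim (subst ln_prod; force)
    have summ: "(\<lambda>x. \<Sum>i<n. ln (g (x i))) \<in> borel_measurable P"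
      using lgm unfolding P_def by measurable
    have Li: "integrable P L"
    proof -
      have "integrable P (\<lambda>x. \<Sum>i<n. ln (g (x i)))" by (rule Bochner_Integration.integrable_sum) (rule ci)
      then show ?thesis using integrable_cong_AE[OF LmP summ AEL] by simp
    qed
    have LI: "(\<integral>x. L x \<partial>P) = real n * h"
    proof -
      have "(\<integral>x. L x \<partial>P) = (\<integral>x. (\<Sum>i<n. ln (g (x i))) \<partial>P)"
        using AEL by (rule integral_cong_AE[OF LmP summ])
      also have "\<dots> = (\<Sum>i<n. (\<integral>x. ln (g (x i)) \<partial>P))"
        by (rule Bochner_Integration.integral_sum) (rule ci)
      also have "\<dots> = real n * h" using cI by simp
      finally show ?thesis .
    qed
    define Sc where "Sc = space P - S"
    have ScP[measurable]: "Sc \<in> sets P" unfolding Sc_def by auto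
    have ScQ[measurable]: "Sc \<in> sets Q" using ScP setsPQ by simp
    have mSc: "measure P Sc = 1 - s" unfolding Sc_def s_def using P.prob_compl[OF SP] by simp
    define IS where "IS = (\<integral>x. L x * indicator S x \<partial>P)"
    define ISc where "ISc = (\<integral>x. L x * indicator Sc x \<partial>P)"
    have LSi: "integrable P (\<lambda>x. L x * indicator S x)" using Li by (intro integrable_real_mult_indicator) auto
    have LSci: "integrable P (\<lambda>x. L x * indicator Sc x)" using Li by (intro integrable_real_mult_indicator) auto
    have split: "real n * h = IS + ISc"
    proof -
      have "(\<integral>x. L x \<partial>P) = (\<integral>x. L x * indicator S x + L x * indicator Sc x \<partial>P)"
        by (intro Bochner_Integration.integral_cong refl) (auto simp: Sc_def indicator_def)
      also have "\<dots> = IS + ISc" unfolding IS_def ISc_def using LSi LSci by (rule Bochner_Integration.integral_add)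
      finally show ?thesis using LI by simp
    qed
    have ISc_ge: "ISc \<ge> - 1 / exp 1"
    proof -
      have "ISc = (\<integral>x. F x * (L x * indicator Sc x) \<partial>Q)"
        unfolding ISc_def Pd using F0 by (subst integral_density) auto
      also have "\<dots> \<ge> (\<integral>x. (- 1 / exp (1::real)) * indicator Sc x \<partial>Q)"
      proof (rule integral_mono)
        show "integrable Q (\<lambda>x. F x * (L x * indicator Sc x))"
          using LSci F0 unfolding Pd by (subst (asm) integrable_density) auto
        show "integrable Q (\<lambda>x. (- 1 / exp (1::real)) * indicator Sc x)"
        proof -
          have "integrable Q (indicator Sc :: _ \<Rightarrow> real)"
            proof -
            have "integrable Q (\<lambda>x. indicator Sc x *\<^sub>R (1::real))"
              using ScQ by (intro Bochner_Integration.integrable_indicator) (auto simp: less_top[symmetric])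
            then show ?thesis by simp
          qed
          then show ?thesis by (intro integrable_mult_right) auto
        qed
        fix x show "(- 1 / exp (1::real)) * indicator Sc x \<le> F x * (L x * indicator Sc x)"
          using xlnx_ge[OF F0[of x]] unfolding L_def by (auto simp: indicator_def)
      qed
      also have "(\<integral>x. (- 1 / exp (1::real)) * indicator Sc x \<partial>Q) = (- 1 / exp 1) * measure Q Sc"
        using ScQ by (simp add: Int_absorb2 sets.sets_into_space)
      also have "\<dots> \<ge> - 1 / exp 1"
        using Q.prob_le_1[of Sc] by (simp add: field_simps)
      finally show ?thesis .
    qed
    define c where "c = - IS / s"
    define K where "K = (\<lambda>x. exp c * ((1 - c) * indicator S x - L x * indicator S x))"
    have Ki: "integrable P K" unfolding K_def using LSi iSP
      by (intro integrable_mult_right Bochner_Integration.integrable_diff) auto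
    have KI: "(\<integral>x. K x \<partial>P) = exp c * s"
    proof -
      have "(\<integral>x. K x \<partial>P) = exp c * ((1 - c) * s - IS)"
        unfolding K_def IS_def s_def using LSi
        by (simp add: Bochner_Integration.integral_diff P.emeasure_eq_measure Int_absorb2 sets.sets_into_space)
      also have "\<dots> = exp c * s" unfolding c_def using s0 by (simp add: field_simps)
      finally show ?thesis .
    qed
    have qS: "exp c * s \<le> measure Q S"
    proof -
      have "exp c * s = (\<integral>x. F x * K x \<partial>Q)"
        using KI unfolding Pd using F0 by (subst (asm) integral_density) (auto simp: K_def)
      also have "\<dots> \<le> (\<integral>x. indicator S x \<partial>Q)"
      proof (rule integral_mono)
        show "integrable Q (\<lambda>x. F x * K x)"
          using Ki F0 unfolding Pd by (subst (asm) integrable_density) (auto simp: K_def)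
        show "integrable Q (indicator S :: _ \<Rightarrow> real)"
          proof -
            have "integrable Q (\<lambda>x. indicator S x *\<^sub>R (1::real))"
              using SQ by (intro Bochner_Integration.integrable_indicator) (auto simp: less_top[symmetric])
            then show ?thesis by simp
          qed
        fix x show "F x * K x \<le> indicator S x"
        proof (cases "x \<in> S \<and> F x > 0")
          case True
          have "1 + (- c - ln (F x)) \<le> exp (- c - ln (F x))" by (rule exp_ge_add_one_self)
          then have "exp c * (1 + (- c - ln (F x))) \<le> exp c * exp (- c - ln (F x))" by simp
          also have "exp c * exp (- c - ln (F x)) = 1 / F x"
            using True by (simp add: exp_diff exp_minus field_simps mult_exp_exp[symmetric])
          finally have "F x * (exp c * (1 + (- c - ln (F x)))) \<le> F x * (1 / F x)"
            using True by (intro mult_left_mono) auto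
          then show ?thesis using True by (simp add: K_def L_def algebra_simps)
        next
          case False
          then show ?thesis using F0[of x] by (auto simp: K_def)
        qed
      qed
      also have "\<dots> = measure Q S" using SQ by (simp add: Int_absorb2 sets.sets_into_space)
      finally show ?thesis .
    qed
    have qpos: "0 < exp c * s" using s0 by simp
    have lnq: "ln (measure Q S * exp (real n * h)) \<ge> c + ln s + real n * h"
    proof -
      have "c + ln s = ln (exp c * s)" using s0 by (simp add: ln_mult)
      also have "\<dots> \<le> ln (measure Q S)" using qS qpos by simp
      finally show ?thesis using part1 by (simp add: ln_mult)
    qed
    have cge: "c \<ge> - (real n * h + 1 / exp 1) / s"
    proof -
      have "IS \<le> real n * h + 1 / exp 1" using split ISc_ge by simp
      then have "- (real n * h + 1 / exp 1) / s \<le> - IS / s" using s0 by (intro divide_right_mono) auto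
      then show ?thesis unfolding c_def by simp
    qed
    have np: "real n > 0" using n by simp
    have "(1 / real n) * ln (measure Q S * exp (real n * h))
          \<ge> (1 / real n) * (- (real n * h + 1 / exp 1) / s + ln s + real n * h)"
      using lnq cge np by (intro mult_left_mono) auto
    also have "(1 / real n) * (- (real n * h + 1 / exp 1) / s + ln s + real n * h)
          = - h * (1 - s) / s + (1 / real n) * ln s - 1 / (real n * exp 1 * s)"
      using np s0 by (simp add: field_simps)
    finally show ?thesis using mSc unfolding Sc_def by simp
  qed
  show ?thesis
  proof (intro conjI impI allI)
    show "measure (PiM {..<n} (\<lambda>_. \<mu>)) S > 0" using part1 unfolding Q_def .
  next
    fix h assume "rel_entropy \<nu> \<mu> = ereal h"
    from part2[OF this] show "(1 / real n) * ln (measure (PiM {..<n} (\<lambda>_. \<mu>)) S * exp (real n * h))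
            \<ge> - h * measure (PiM {..<n} (\<lambda>_. \<nu>)) (space (PiM {..<n} (\<lambda>_. \<nu>)) - S)
                 / measure (PiM {..<n} (\<lambda>_. \<nu>)) S
              + (1 / real n) * ln (measure (PiM {..<n} (\<lambda>_. \<nu>)) S)
              - 1 / (real n * exp 1 * measure (PiM {..<n} (\<lambda>_. \<nu>)) S)"
      unfolding P_def Q_def s_def .
  qed
qed

theorem propositionA1:
  fixes \<mu> \<nu> :: "'a::polish_space measure"
    and A :: "'a measure set"
    and n :: nat
  assumes "prob_space \<mu>" and "sets \<mu> = sets borel"
    and "n \<ge> 1"
    and "A \<subseteq> {M. prob_space M \<and> sets M = sets borel}"
    and "{x \<in> space (PiM {..<n} (\<lambda>_. \<mu>)). emp_measure n x \<in> A} \<in> sets (PiM {..<n} (\<lambda>_. \<mu>))"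
    and "prob_space \<nu>" and "sets \<nu> = sets borel"
    and "absolutely_continuous \<mu> \<nu>"
    and "measure (PiM {..<n} (\<lambda>_. \<nu>)) {x \<in> space (PiM {..<n} (\<lambda>_. \<nu>)). emp_measure n x \<in> A} > 0"
  shows "(rel_entropy \<nu> \<mu> = \<infinity> \<longrightarrow>
            measure (PiM {..<n} (\<lambda>_. \<mu>)) {x \<in> space (PiM {..<n} (\<lambda>_. \<mu>)). emp_measure n x \<in> A} > 0)
       \<and> (\<forall>h. rel_entropy \<nu> \<mu> = ereal h \<longrightarrow>
            (1 / real n) * ln (measure (PiM {..<n} (\<lambda>_. \<mu>))
                 {x \<in> space (PiM {..<n} (\<lambda>_. \<mu>)). emp_measure n x \<in> A} * exp (real n * h))
            \<ge> - h * measure (PiM {..<n} (\<lambda>_. \<nu>))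
                    {x \<in> space (PiM {..<n} (\<lambda>_. \<nu>)). emp_measure n x \<notin> A}
                 / measure (PiM {..<n} (\<lambda>_. \<nu>))
                    {x \<in> space (PiM {..<n} (\<lambda>_. \<nu>)). emp_measure n x \<in> A}
              + (1 / real n) * ln (measure (PiM {..<n} (\<lambda>_. \<nu>))
                    {x \<in> space (PiM {..<n} (\<lambda>_. \<nu>)). emp_measure n x \<in> A})
              - 1 / (real n * exp 1 * measure (PiM {..<n} (\<lambda>_. \<nu>))
                    {x \<in> space (PiM {..<n} (\<lambda>_. \<nu>)). emp_measure n x \<in> A}))"
proof -
  let ?S = "{x \<in> space (PiM {..<n} (\<lambda>_. \<mu>)). emp_measure n x \<in> A}"
  have sn: "sets \<nu> = sets \<mu>" using assms by simp
  have sp: "space (PiM {..<n} (\<lambda>_. \<nu>)) = space (PiM {..<n} (\<lambda>_. \<mu>))"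
    by (rule sets_eq_imp_space_eq, rule sets_PiM_cong) (auto simp: sn)
  have e1: "{x \<in> space (PiM {..<n} (\<lambda>_. \<nu>)). emp_measure n x \<in> A} = ?S" using sp by simp
  have e2: "{x \<in> space (PiM {..<n} (\<lambda>_. \<nu>)). emp_measure n x \<notin> A} = space (PiM {..<n} (\<lambda>_. \<nu>)) - ?S"
    using sp by auto
  have pos: "measure (PiM {..<n} (\<lambda>_. \<nu>)) ?S > 0" using assms(9) e1 by simp
  show ?thesis unfolding e1 e2
    by (rule main_lemma[OF assms(1) assms(6) sn assms(8) assms(3) assms(5) pos])
qed

end
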